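(* Let $\Gamma$ be a group and $\alpha\in\mathrm{End}(\Gamma)$. Then $G(\alpha)\cong G(\varprojlim\alpha)$.
   Context: $\{0,1\}^*$ denotes the set of finite words over $\{0,1\}$ (including the empty word $\epsilon$), and $\mathfrak C=\{0,1\}^{\mathbb N}$ the Cantor space. A finite complete prefix code is a finite set $\{t_1,\dots,t_n\}\subset\{0,1\}^*$ such that every $x\in\mathfrak C$ has exactly one $t_i$ as a prefix. Thompson's group $V$ is the group of homeomorphisms $v$ of $\mathfrak C$ for which there exist finite complete prefix codes $\{t_1,\dots,t_n\}$, $\{s_1,\dots,s_n\}$ and a permutation $\sigma$ with $v(t_iw)=s_{\sigma(i)}w$ for all $i$, $w\in\mathfrak C$. For a group $\Lambda$ and group morphism $\omega:\Lambda\times\Lambda\to\Lambda$, $K(\omega)$ is the group of maps $a:\{0,1\}^*\to\Lambda$ (pointwise product) with $a(u)=\omega(a(u0),a(u1))$ for all $u$; $V$ acts on it by $\pi(v)(a)(s_{\sigma(i)}u)=a(t_iu)$ for all $i$, $u\in\{0,1\}^*$ (this determines $\pi(v)(a)\in K(\omega)$ uniquely), and $G(\omega):=K(\omega)\rtimes V$ with $vav^{-1}=\pi(v)(a)$. For $\beta\in\mathrm{End}(\Lambda)$, $G(\beta):=G(\omega)$ with $\omega(g,h)=\beta(g)$. $\varprojlim\Gamma:=\{(g_n)\in\prod_{\mathbb N}\Gamma: g_n=\alpha(g_{n+1})\ \forall n\}$, and $\varprojlim\alpha:\varprojlim\Gamma\to\varprojlim\Gamma$, $(g_n)\mapsto(\alpha(g_n))$,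 which is an automorphism of $\varprojlim\Gamma$. *)

theory Defs
  imports "HOL-Analysis.Analysis" "HOL-Algebra.Algebra"
begin

text \<open>Words over {0,1} are bool lists (0 = False, 1 = True); the Cantor space is nat => bool.\<close>

type_synonym word = "bool list"
type_synonym cantor = "nat \<Rightarrow> bool"

definition cantor_top :: "cantor topology" where
  "cantor_top = product_topology (\<lambda>_::nat. discrete_topology (UNIV::bool set)) UNIV"

definition is_prefix :: "word \<Rightarrow> cantor \<Rightarrow> bool" where
  "is_prefix t x \<longleftrightarrow> (\<forall>i<length t. x i = t ! i)"

definition wconc :: "word \<Rightarrow> cantor \<Rightarrow> cantor" where
  "wconc t w = (\<lambda>i. if i < length t then t ! i else w (i - length t))"

definition complete_prefix_code :: "word set \<Rightarrow> bool" where
  "complete_prefix_code T \<longleftrightarrow> finite T \<and> (\<forall>x::cantor. \<exists>!t. t \<in> T \<and> is_prefix t x)"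

definition V_rep :: "(cantor \<Rightarrow> cantor) \<Rightarrow> word list \<Rightarrow> word list \<Rightarrow> (nat \<Rightarrow> nat) \<Rightarrow> bool" where
  "V_rep v ts ss \<sigma> \<longleftrightarrow> length ts = length ss \<and> distinct ts \<and> distinct ss \<and>
     complete_prefix_code (set ts) \<and> complete_prefix_code (set ss) \<and>
     bij_betw \<sigma> {..<length ts} {..<length ts} \<and>
     (\<forall>i<length ts. \<forall>w. v (wconc (ts ! i) w) = wconc (ss ! \<sigma> i) w)"

definition thompson_V :: "(cantor \<Rightarrow> cantor) set" where
  "thompson_V = {v. homeomorphic_map cantor_top cantor_top v \<and> (\<exists>ts ss \<sigma>. V_rep v ts ss \<sigma>)}"

definition K_set :: "('a, 'b) monoid_scheme \<Rightarrow> ('a \<Rightarrow> 'a \<Rightarrow> 'a) \<Rightarrow> (word \<Rightarrow> 'a) set" where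
  "K_set \<Lambda> \<omega> = {a. (\<forall>u. a u \<in> carrier \<Lambda>) \<and> (\<forall>u. a u = \<omega> (a (u @ [False])) (a (u @ [True])))}"

definition pi_V :: "('a, 'b) monoid_scheme \<Rightarrow> ('a \<Rightarrow> 'a \<Rightarrow> 'a) \<Rightarrow> (cantor \<Rightarrow> cantor)
    \<Rightarrow> (word \<Rightarrow> 'a) \<Rightarrow> (word \<Rightarrow> 'a)" where
  "pi_V \<Lambda> \<omega> v a = (THE b. b \<in> K_set \<Lambda> \<omega> \<and> (\<exists>ts ss \<sigma>. V_rep v ts ss \<sigma> \<and>
       (\<forall>i<length ts. \<forall>u. b (ss ! \<sigma> i @ u) = a (ts ! i @ u))))"

text \<open>G(omega) = K(omega) \<rtimes> V, with (a,v)(b,w) = (a \<cdot> pi(v)(b), v \<circ> w), so that v a v^-1 = pi(v)(a).\<close>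
definition G_omega :: "('a, 'b) monoid_scheme \<Rightarrow> ('a \<Rightarrow> 'a \<Rightarrow> 'a)
    \<Rightarrow> ((word \<Rightarrow> 'a) \<times> (cantor \<Rightarrow> cantor)) monoid" where
  "G_omega \<Lambda> \<omega> = \<lparr> carrier = K_set \<Lambda> \<omega> \<times> thompson_V,
     mult = (\<lambda>(a, v) (b, w). ((\<lambda>u. a u \<otimes>\<^bsub>\<Lambda>\<^esub> pi_V \<Lambda> \<omega> v b u), v \<circ> w)),
     one = ((\<lambda>u. \<one>\<^bsub>\<Lambda>\<^esub>), id) \<rparr>"

definition G_end :: "('a, 'b) monoid_scheme \<Rightarrow> ('a \<Rightarrow> 'a)
    \<Rightarrow> ((word \<Rightarrow> 'a) \<times> (cantor \<Rightarrow> cantor)) monoid" where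
  "G_end \<Lambda> \<beta> = G_omega \<Lambda> (\<lambda>g h. \<beta> g)"

definition invlim :: "('a, 'b) monoid_scheme \<Rightarrow> ('a \<Rightarrow> 'a) \<Rightarrow> (nat \<Rightarrow> 'a) monoid" where
  "invlim \<Gamma> \<alpha> = \<lparr> carrier = {g. (\<forall>n. g n \<in> carrier \<Gamma>) \<and> (\<forall>n. g n = \<alpha> (g (Suc n)))},
     mult = (\<lambda>g h n. g n \<otimes>\<^bsub>\<Gamma>\<^esub> h n),
     one = (\<lambda>n. \<one>\<^bsub>\<Gamma>\<^esub>) \<rparr>"

definition invlim_map :: "('a \<Rightarrow> 'a) \<Rightarrow> (nat \<Rightarrow> 'a) \<Rightarrow> (nat \<Rightarrow> 'a)" where
  "invlim_map \<alpha> g = (\<lambda>n. \<alpha> (g n))"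

end

theory Submission
  imports Defs
begin

lemma wconc_append: "wconc (p @ q) z = wconc p (wconc q z)"
  by (auto simp: wconc_def fun_eq_iff nth_append)

lemma wconc_inj:
  assumes "\<And>z. wconc p z = wconc q z"
  shows "p = q"
proof -
  have len: "length p = length q"
  proof (rule ccontr)
    assume "length p \<noteq> length q"
    then consider "length p < length q" | "length q < length p" by linarith
    then show False
    proof cases
      case 1
      have "wconc p (\<lambda>_. \<not> q ! length p) (length p) = wconc q (\<lambda>_. \<not> q ! length p) (length p)"
        using assms by simp
      with 1 show False by (simp add: wconc_def)
    next
      case 2
      have "wconc p (\<lambda>_. \<not> p ! length q) (length q) = wconc q (\<lambda>_. \<not> p ! length q) (length q)"
        using assms by simp
      with 2 show False by (simp add: wconc_def)
    qed
  qed
  show ?thesis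
  proof (rule nth_equalityI[OF len])
    fix i assume i: "i < length p"
    have "wconc p (\<lambda>_. False) i = wconc q (\<lambda>_. False) i" using assms by simp
    then show "p ! i = q ! i" using i len by (simp add: wconc_def)
  qed
qed

lemma prefix_split:
  assumes "is_prefix t (wconc W z)" "length t \<le> length W"
  shows "W = t @ drop (length t) W"
proof -
  have "take (length t) W = t"
  proof (rule nth_equalityI)
    show "length (take (length t) W) = length t" using assms(2) by simp
    fix i assume "i < length (take (length t) W)"
    then have i: "i < length t" "i < length W" by auto
    have "wconc W z i = t ! i" using assms(1) i by (simp add: is_prefix_def)
    then show "take (length t) W ! i = t ! i"
      using i by (simp add: wconc_def)
  qed
  then show ?thesis by (metis append_take_drop_id)
qed

lemma prefix_append: "is_prefix t (wconc (t @ u) z)"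
  by (simp add: is_prefix_def wconc_def nth_append)

lemma decomp_exists:
  assumes "V_rep v ts ss \<sigma>" "length W \<ge> sum_list (map length ss)"
  shows "\<exists>i r. i < length ts \<and> W = ss ! \<sigma> i @ r"
proof -
  from assms(1) have cpc: "complete_prefix_code (set ss)" and len: "length ts = length ss"
    and bij: "bij_betw \<sigma> {..<length ts} {..<length ts}"
    by (auto simp: V_rep_def)
  from cpc obtain t where t: "t \<in> set ss" "is_prefix t (wconc W (\<lambda>_. False))"
    unfolding complete_prefix_code_def by blast
  then obtain j where j: "j < length ss" "t = ss ! j" by (metis in_set_conv_nth)
  then have "j \<in> \<sigma> ` {..<length ts}" using bij len by (simp add: bij_betw_def)
  then obtain i where i: "i < length ts" "\<sigma> i = j" by auto
  have "length t \<le> sum_list (map length ss)"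
    using t(1) by (simp add: member_le_sum_list)
  then have "W = t @ drop (length t) W" using prefix_split[OF t(2)] assms(2) by simp
  then show ?thesis using i j by metis
qed

lemma decomp_unique:
  assumes "V_rep v ts ss \<sigma>" "i < length ts" "i' < length ts" "ss ! \<sigma> i @ r = ss ! \<sigma> i' @ r'"
  shows "i = i' \<and> r = r'"
proof -
  from assms(1) have cpc: "complete_prefix_code (set ss)" and len: "length ts = length ss"
    and bij: "bij_betw \<sigma> {..<length ts} {..<length ts}" and dist: "distinct ss"
    by (auto simp: V_rep_def)
  have s1: "\<sigma> i < length ss" "\<sigma> i' < length ss" using bij assms(2,3) len
    by (auto simp: bij_betw_def)
  let ?x = "wconc (ss ! \<sigma> i @ r) (\<lambda>_. False)"
  have p1: "is_prefix (ss ! \<sigma> i) ?x" by (rule prefix_append)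
  have p2: "is_prefix (ss ! \<sigma> i') ?x" unfolding assms(4) by (rule prefix_append)
  have "\<exists>!t. t \<in> set ss \<and> is_prefix t ?x" using cpc by (simp add: complete_prefix_code_def)
  then obtain t0 where t0: "\<And>y. y \<in> set ss \<Longrightarrow> is_prefix y ?x \<Longrightarrow> y = t0" by blast
  have "ss ! \<sigma> i = ss ! \<sigma> i'"
    using t0[OF nth_mem[OF s1(1)] p1] t0[OF nth_mem[OF s1(2)] p2] by simp
  then have "\<sigma> i = \<sigma> i'" using dist s1 nth_eq_iff_index_eq by blast
  then have "i = i'" using bij assms(2,3) by (auto simp: bij_betw_def inj_on_def)
  then show ?thesis using assms(4) by simp
qed

definition decode :: "word list \<Rightarrow> word list \<Rightarrow> (nat \<Rightarrow> nat) \<Rightarrow> word \<Rightarrow> word" where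
  "decode ts ss \<sigma> W = (THE y. \<exists>i r. i < length ts \<and> W = ss ! \<sigma> i @ r \<and> y = ts ! i @ r)"

lemma decode_eq:
  assumes "V_rep v ts ss \<sigma>" "i < length ts"
  shows "decode ts ss \<sigma> (ss ! \<sigma> i @ u) = ts ! i @ u"
  unfolding decode_def
proof (rule the_equality)
  show "\<exists>i' r. i' < length ts \<and> ss ! \<sigma> i @ u = ss ! \<sigma> i' @ r \<and> ts ! i @ u = ts ! i' @ r"
    using assms(2) by blast
  fix y assume "\<exists>i' r. i' < length ts \<and> ss ! \<sigma> i @ u = ss ! \<sigma> i' @ r \<and> y = ts ! i' @ r"
  then obtain i' r where h: "i' < length ts" "ss ! \<sigma> i @ u = ss ! \<sigma> i' @ r" "y = ts ! i' @ r" by blast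
  have "i = i' \<and> u = r" by (rule decomp_unique[OF assms(1) assms(2) h(1) h(2)])
  then show "y = ts ! i @ u" using h(3) by simp
qed

lemma K_rel_end: "a \<in> K_set \<Lambda> (\<lambda>g h. \<beta> g) \<Longrightarrow> a u = \<beta> (a (u @ [False]))"
  unfolding K_set_def by blast

lemma K_carr: "a \<in> K_set \<Lambda> \<omega> \<Longrightarrow> a u \<in> carrier \<Lambda>"
  unfolding K_set_def by blast

lemma K_setI_end:
  "(\<And>u. a u \<in> carrier \<Lambda>) \<Longrightarrow> (\<And>u. a u = \<beta> (a (u @ [False]))) \<Longrightarrow> a \<in> K_set \<Lambda> (\<lambda>g h. \<beta> g)"
  unfolding K_set_def by blast

lemma carrier_invlim:
  "carrier (invlim \<Gamma> \<alpha>) = {g. (\<forall>n. g n \<in> carrier \<Gamma>) \<and> (\<forall>n. g n = \<alpha> (g (Suc n)))}"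
  by (simp add: invlim_def)

lemma invlim_rel: "g \<in> carrier (invlim \<Gamma> \<alpha>) \<Longrightarrow> g n = \<alpha> (g (Suc n))"
  unfolding carrier_invlim by blast

lemma invlim_carr: "g \<in> carrier (invlim \<Gamma> \<alpha>) \<Longrightarrow> g n \<in> carrier \<Gamma>"
  unfolding carrier_invlim by blast

lemma invlim_carrI:
  "(\<And>n. g n \<in> carrier \<Gamma>) \<Longrightarrow> (\<And>n. g n = \<alpha> (g (Suc n))) \<Longrightarrow> g \<in> carrier (invlim \<Gamma> \<alpha>)"
  unfolding carrier_invlim by blast

lemma K_iter:
  assumes "a \<in> K_set \<Lambda> (\<lambda>g h. \<beta> g)"
  shows "a u = (\<beta> ^^ k) (a (u @ replicate k False))"
proof (induction k arbitrary: u)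
  case 0
  then show ?case by simp
next
  case (Suc k)
  have "a u = (\<beta> ^^ k) (a (u @ replicate k False))" by (rule Suc)
  also have "a (u @ replicate k False) = \<beta> (a ((u @ replicate k False) @ [False]))"
    by (rule K_rel_end[OF assms])
  also have "(u @ replicate k False) @ [False] = u @ replicate (Suc k) False"
    by (simp add: replicate_append_same)
  finally show ?case by (simp add: funpow_Suc_right funpow_swap1)
qed

definition Pprop :: "(word \<Rightarrow> 'a) \<Rightarrow> (word \<Rightarrow> 'a) \<Rightarrow> word list \<Rightarrow> word list \<Rightarrow> (nat \<Rightarrow> nat) \<Rightarrow> bool" where
  "Pprop a b ts ss \<sigma> \<longleftrightarrow> (\<forall>i<length ts. \<forall>u. b (ss ! \<sigma> i @ u) = a (ts ! i @ u))"

definition bwit :: "('a \<Rightarrow> 'a) \<Rightarrow> (word \<Rightarrow> 'a) \<Rightarrow> word list \<Rightarrow> word list \<Rightarrow> (nat \<Rightarrow> nat) \<Rightarrow> word \<Rightarrow> 'a" where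
  "bwit \<alpha> a ts ss \<sigma> w = (\<alpha> ^^ sum_list (map length ss))
      (a (decode ts ss \<sigma> (w @ replicate (sum_list (map length ss)) False)))"

lemma funpow_carrier:
  assumes "\<forall>x\<in>carrier \<Gamma>. \<alpha> x \<in> carrier \<Gamma>" "x \<in> carrier \<Gamma>"
  shows "(\<alpha> ^^ k) x \<in> carrier \<Gamma>"
  by (induction k) (use assms in auto)

lemma bwit_props:
  assumes rep: "V_rep v ts ss \<sigma>" and a: "a \<in> K_set \<Gamma> (\<lambda>g h. \<alpha> g)"
    and hc: "\<forall>x\<in>carrier \<Gamma>. \<alpha> x \<in> carrier \<Gamma>"
  shows "bwit \<alpha> a ts ss \<sigma> \<in> K_set \<Gamma> (\<lambda>g h. \<alpha> g) \<and> Pprop a (bwit \<alpha> a ts ss \<sigma>) ts ss \<sigma>"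
proof -
  let ?k = "sum_list (map length ss)"
  let ?b = "bwit \<alpha> a ts ss \<sigma>"
  have carr: "?b w \<in> carrier \<Gamma>" for w
    unfolding bwit_def using a hc by (intro funpow_carrier) (auto simp: K_carr)
  have rel: "?b w = \<alpha> (?b (w @ [False]))" for w
  proof -
    obtain i r where ir: "i < length ts" "w @ replicate ?k False = ss ! \<sigma> i @ r"
      using decomp_exists[OF rep, of "w @ replicate ?k False"] by auto
    have "w @ [False] @ replicate ?k False = (w @ replicate ?k False) @ [False]"
      by (simp add: replicate_append_same)
    also have "\<dots> = ss ! \<sigma> i @ (r @ [False])" using ir(2) by simp
    finally have e2: "w @ [False] @ replicate ?k False = ss ! \<sigma> i @ (r @ [False])" .
    have h1: "?b w = (\<alpha> ^^ ?k) (a (ts ! i @ r))"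
      unfolding bwit_def ir(2) decode_eq[OF rep ir(1)] ..
    have h2: "a (ts ! i @ r) = \<alpha> (a ((ts ! i @ r) @ [False]))"
      by (rule K_rel_end[OF a])
    have h3: "?b (w @ [False]) = (\<alpha> ^^ ?k) (a (ts ! i @ r @ [False]))"
      unfolding bwit_def using e2 decode_eq[OF rep ir(1)] by simp
    show ?thesis unfolding h1 h3 h2 by (simp add: funpow_swap1)
  qed
  have P: "Pprop a ?b ts ss \<sigma>"
    unfolding Pprop_def
  proof (intro allI impI)
    fix i u assume i: "i < length ts"
    have "?b (ss ! \<sigma> i @ u) = (\<alpha> ^^ ?k) (a (ts ! i @ u @ replicate ?k False))"
      unfolding bwit_def using decode_eq[OF rep i, of "u @ replicate ?k False"] by simp
    also have "\<dots> = a (ts ! i @ u)"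
      using K_iter[OF a, of "ts ! i @ u" ?k] by simp
    finally show "?b (ss ! \<sigma> i @ u) = a (ts ! i @ u)" .
  qed
  have "?b \<in> K_set \<Gamma> (\<lambda>g h. \<alpha> g)" by (rule K_setI_end) (rule carr, rule rel)
  then show ?thesis using P by blast
qed

lemma V_inj:
  assumes "v \<in> thompson_V"
  shows "inj v"
proof -
  have "topspace cantor_top = UNIV"
    by (simp add: cantor_top_def topspace_product_topology PiE_UNIV_domain)
  then show ?thesis using assms by (simp add: thompson_V_def homeomorphic_map_def)
qed

lemma uniq:
  assumes injv: "inj v" and rep: "V_rep v ts ss \<sigma>" and rep': "V_rep v ts' ss' \<sigma>'"
    and b: "b \<in> K_set \<Lambda> (\<lambda>g h. \<beta> g)" and b': "b' \<in> K_set \<Lambda> (\<lambda>g h. \<beta> g)"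
    and P: "Pprop a b ts ss \<sigma>" and P': "Pprop a b' ts' ss' \<sigma>'"
  shows "b = b'"
proof
  fix w
  let ?k = "sum_list (map length ss) + sum_list (map length ss')"
  let ?W = "w @ replicate ?k False"
  obtain i r where ir: "i < length ts" "?W = ss ! \<sigma> i @ r"
    using decomp_exists[OF rep, of ?W] by auto
  obtain i' r' where ir': "i' < length ts'" "?W = ss' ! \<sigma>' i' @ r'"
    using decomp_exists[OF rep', of ?W] by auto
  have vr: "\<forall>i<length ts. \<forall>w. v (wconc (ts ! i) w) = wconc (ss ! \<sigma> i) w"
    using rep by (simp add: V_rep_def)
  have vr': "\<forall>i<length ts'. \<forall>w. v (wconc (ts' ! i) w) = wconc (ss' ! \<sigma>' i) w"
    using rep' by (simp add: V_rep_def)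
  have eq: "ts ! i @ r = ts' ! i' @ r'"
  proof (rule wconc_inj)
    fix z
    have "v (wconc (ts ! i @ r) z) = wconc ?W z"
      using vr ir by (simp add: wconc_append)
    also have "\<dots> = v (wconc (ts' ! i' @ r') z)"
      using vr' ir' by (simp add: wconc_append)
    finally show "wconc (ts ! i @ r) z = wconc (ts' ! i' @ r') z"
      using injv by (simp add: inj_eq)
  qed
  have "b w = (\<beta> ^^ ?k) (b ?W)" by (rule K_iter[OF b])
  also have "b ?W = a (ts ! i @ r)" using P ir by (simp add: Pprop_def)
  also have "\<dots> = a (ts' ! i' @ r')" using eq by simp
  also have "\<dots> = b' ?W" using P' ir' by (simp add: Pprop_def)
  also have "(\<beta> ^^ ?k) (b' ?W) = b' w" by (rule K_iter[OF b', symmetric])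
  finally show "b w = b' w" .
qed

lemma pi_V_eq:
  assumes v: "v \<in> thompson_V" and b: "b \<in> K_set \<Lambda> (\<lambda>g h. \<beta> g)"
    and rep: "V_rep v ts ss \<sigma>" and P: "Pprop a b ts ss \<sigma>"
  shows "pi_V \<Lambda> (\<lambda>g h. \<beta> g) v a = b"
  unfolding pi_V_def
proof (rule the_equality)
  show "b \<in> K_set \<Lambda> (\<lambda>g h. \<beta> g) \<and> (\<exists>ts ss \<sigma>. V_rep v ts ss \<sigma> \<and>
       (\<forall>i<length ts. \<forall>u. b (ss ! \<sigma> i @ u) = a (ts ! i @ u)))"
    using b rep P by (auto simp: Pprop_def)
  fix b' assume "b' \<in> K_set \<Lambda> (\<lambda>g h. \<beta> g) \<and> (\<exists>ts ss \<sigma>. V_rep v ts ss \<sigma> \<and>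
       (\<forall>i<length ts. \<forall>u. b' (ss ! \<sigma> i @ u) = a (ts ! i @ u)))"
  then obtain ts' ss' \<sigma>' where b': "b' \<in> K_set \<Lambda> (\<lambda>g h. \<beta> g)" "V_rep v ts' ss' \<sigma>'"
    "Pprop a b' ts' ss' \<sigma>'" by (auto simp: Pprop_def)
  show "b' = b" using uniq[OF V_inj[OF v] b'(2) rep b'(1) b b'(3) P] .
qed

definition phi :: "(word \<Rightarrow> 'a) \<Rightarrow> word \<Rightarrow> nat \<Rightarrow> 'a" where
  "phi a = (\<lambda>u n. a (u @ replicate n False))"

definition psi :: "(word \<Rightarrow> nat \<Rightarrow> 'a) \<Rightarrow> word \<Rightarrow> 'a" where
  "psi b = (\<lambda>u. b u 0)"

lemma phi_in:
  assumes "a \<in> K_set \<Gamma> (\<lambda>g h. \<alpha> g)"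
  shows "phi a \<in> K_set (invlim \<Gamma> \<alpha>) (\<lambda>g h. invlim_map \<alpha> g)"
proof -
  have c: "a u \<in> carrier \<Gamma>" for u by (rule K_carr[OF assms])
  have r: "a u = \<alpha> (a (u @ [False]))" for u by (rule K_rel_end[OF assms])
  have r2: "a (u @ replicate n False) = \<alpha> (a (u @ replicate (Suc n) False))" for u n
  proof -
    have "u @ replicate (Suc n) False = (u @ replicate n False) @ [False]"
      by (simp add: replicate_append_same)
    then show ?thesis using r[of "u @ replicate n False"] by simp
  qed
  have r3: "a (u @ replicate n False) = \<alpha> (a ((u @ [False]) @ replicate n False))" for u n
  proof -
    have "(u @ [False]) @ replicate n False = u @ replicate (Suc n) False" by simp
    then show ?thesis using r2[of u n] by simp
  qed
  show ?thesis
  proof (rule K_setI_end)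
    fix u
    show "phi a u \<in> carrier (invlim \<Gamma> \<alpha>)"
      unfolding phi_def by (rule invlim_carrI) (rule c, rule r2)
    show "phi a u = invlim_map \<alpha> (phi a (u @ [False]))"
      unfolding phi_def invlim_map_def by (rule ext) (rule r3)
  qed
qed

lemma psi_in:
  assumes "b \<in> K_set (invlim \<Gamma> \<alpha>) (\<lambda>g h. invlim_map \<alpha> g)"
  shows "psi b \<in> K_set \<Gamma> (\<lambda>g h. \<alpha> g)"
proof (rule K_setI_end)
  fix u
  show "psi b u \<in> carrier \<Gamma>" unfolding psi_def by (rule invlim_carr[OF K_carr[OF assms]])
  show "psi b u = \<alpha> (psi b (u @ [False]))"
    unfolding psi_def using fun_cong[OF K_rel_end[OF assms, of u], of 0] by (simp add: invlim_map_def)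
qed

lemma psi_phi: "psi (phi a) = a"
  by (simp add: psi_def phi_def)

lemma phi_psi:
  assumes "b \<in> K_set (invlim \<Gamma> \<alpha>) (\<lambda>g h. invlim_map \<alpha> g)"
  shows "phi (psi b) = b"
proof -
  have c: "b u n = \<alpha> (b u (Suc n))" for u n by (rule invlim_rel[OF K_carr[OF assms]])
  have r: "b u n = \<alpha> (b (u @ [False]) n)" for u n
    using fun_cong[OF K_rel_end[OF assms, of u], of n] by (simp only: invlim_map_def)
  have "b (u @ replicate n False) 0 = b u n" for u n
  proof (induction n arbitrary: u)
    case 0 then show ?case by simp
  next
    case (Suc n)
    have "b (u @ replicate (Suc n) False) 0 = b ((u @ [False]) @ replicate n False) 0" by simp
    also have "\<dots> = b (u @ [False]) n" by (rule Suc)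
    also have "\<dots> = b u (Suc n)" using c[of "u @ [False]" n] r[of u "Suc n"] by simp
    finally show ?case .
  qed
  then show ?thesis by (simp add: phi_def psi_def fun_eq_iff)
qed

lemma Pprop_phi: "Pprop a b ts ss \<sigma> \<Longrightarrow> Pprop (phi a) (phi b) ts ss \<sigma>"
  by (simp add: Pprop_def phi_def)

lemma pi_commute:
  assumes v: "v \<in> thompson_V" and a: "a \<in> K_set \<Gamma> (\<lambda>g h. \<alpha> g)"
    and hc: "\<forall>x\<in>carrier \<Gamma>. \<alpha> x \<in> carrier \<Gamma>"
  shows "phi (pi_V \<Gamma> (\<lambda>g h. \<alpha> g) v a) = pi_V (invlim \<Gamma> \<alpha>) (\<lambda>g h. invlim_map \<alpha> g) v (phi a)"
proof -
  from v obtain ts ss \<sigma> where rep: "V_rep v ts ss \<sigma>" by (auto simp: thompson_V_def)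
  let ?b = "bwit \<alpha> a ts ss \<sigma>"
  have bp: "?b \<in> K_set \<Gamma> (\<lambda>g h. \<alpha> g)" "Pprop a ?b ts ss \<sigma>"
    using bwit_props[OF rep a hc] by auto
  have "pi_V \<Gamma> (\<lambda>g h. \<alpha> g) v a = ?b" by (rule pi_V_eq[OF v bp(1) rep bp(2)])
  moreover have "pi_V (invlim \<Gamma> \<alpha>) (\<lambda>g h. invlim_map \<alpha> g) v (phi a) = phi ?b"
    by (rule pi_V_eq[OF v phi_in[OF bp(1)] rep Pprop_phi[OF bp(2)]])
  ultimately show ?thesis by simp
qed

theorem mainTheorem3:
  fixes \<Gamma> :: "('a, 'b) monoid_scheme" and \<alpha> :: "'a \<Rightarrow> 'a"
  assumes "group \<Gamma>" and "\<alpha> \<in> hom \<Gamma> \<Gamma>"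
  shows "G_end \<Gamma> \<alpha> \<cong> G_end (invlim \<Gamma> \<alpha>) (invlim_map \<alpha>)"
proof -
  have hc: "\<forall>x\<in>carrier \<Gamma>. \<alpha> x \<in> carrier \<Gamma>" using assms(2) by (auto simp: hom_def)
  define h where "h = (\<lambda>(a :: word \<Rightarrow> 'a, v :: cantor \<Rightarrow> cantor). (phi a, v))"
  have hom: "h \<in> hom (G_end \<Gamma> \<alpha>) (G_end (invlim \<Gamma> \<alpha>) (invlim_map \<alpha>))"
    unfolding hom_def
  proof (intro CollectI conjI ballI)
    show "h \<in> carrier (G_end \<Gamma> \<alpha>) \<rightarrow> carrier (G_end (invlim \<Gamma> \<alpha>) (invlim_map \<alpha>))"
      by (auto simp: h_def G_end_def G_omega_def phi_in)
    fix x y assume x: "x \<in> carrier (G_end \<Gamma> \<alpha>)" and y: "y \<in> carrier (G_end \<Gamma> \<alpha>)"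
    obtain a v where xa: "x = (a, v)" by (cases x)
    obtain c w where yc: "y = (c, w)" by (cases y)
    have v: "v \<in> thompson_V" and c: "c \<in> K_set \<Gamma> (\<lambda>g h. \<alpha> g)"
      using x y xa yc by (auto simp: G_end_def G_omega_def)
    show "h (x \<otimes>\<^bsub>G_end \<Gamma> \<alpha>\<^esub> y) = h x \<otimes>\<^bsub>G_end (invlim \<Gamma> \<alpha>) (invlim_map \<alpha>)\<^esub> h y"
      using pi_commute[OF v c hc]
      by (simp add: xa yc h_def G_end_def G_omega_def phi_def invlim_def fun_eq_iff)
  qed
  have bij: "bij_betw h (carrier (G_end \<Gamma> \<alpha>)) (carrier (G_end (invlim \<Gamma> \<alpha>) (invlim_map \<alpha>)))"
  proof (rule bij_betwI[where g = "\<lambda>(b, v). (psi b, v)"])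
    show "h \<in> carrier (G_end \<Gamma> \<alpha>) \<rightarrow> carrier (G_end (invlim \<Gamma> \<alpha>) (invlim_map \<alpha>))"
      by (auto simp: h_def G_end_def G_omega_def phi_in)
    show "(\<lambda>(b, v). (psi b, v)) \<in> carrier (G_end (invlim \<Gamma> \<alpha>) (invlim_map \<alpha>)) \<rightarrow> carrier (G_end \<Gamma> \<alpha>)"
      by (auto simp: G_end_def G_omega_def psi_in)
    show "\<And>x. x \<in> carrier (G_end \<Gamma> \<alpha>) \<Longrightarrow> (case h x of (b, v) \<Rightarrow> (psi b, v)) = x"
      by (auto simp: h_def psi_phi)
    show "\<And>y. y \<in> carrier (G_end (invlim \<Gamma> \<alpha>) (invlim_map \<alpha>)) \<Longrightarrow> h (case y of (b, v) \<Rightarrow> (psi b, v)) = y"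
      by (auto simp: h_def G_end_def G_omega_def phi_psi)
  qed
  show ?thesis
    using hom bij by (auto simp: is_iso_def iso_def)
qed

end
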